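(* Let $\mathfrak{S}=(\mathcal{X},\mathsf{S},\gamma,(\Lambda_{a})_{a\in\mathcal{A}})$ be a spectral decomposition system for the Euclidean space $\mathfrak{H}$ with spectral-induced ordering mapping $\tau$, and let $x,y\in\mathcal{X}$. Then: (i) $\tau\circ\tau=\tau$; (ii) for every $a\in\mathcal{A}$, $\|\Lambda_ax\|=\|x\|=\|\tau(x)\|$; (iii) $\langle x,y\rangle\leq\langle\tau(x),\tau(y)\rangle$; (iv) $\langle\tau(x),\tau(y)\rangle=\max_{s\in\mathsf{S}}\langle s\cdot x,y\rangle$; (v) $\|\tau(x)-\tau(y)\|\leq\|x-y\|$; (vi) the range of $\tau$ is a closed convex cone in $\mathcal{X}$; (vii) the orbit $\mathsf{S}\cdot x$ is compact.
   Context: A Euclidean space is a finite-dimensional real inner product space; inner products are written $\langle\cdot,\cdot\rangle$ and norms $\|\cdot\|$. Let $\mathfrak{H}$ and $\mathcal{X}$ be Euclidean spaces, let $\mathsf{S}$ be a group acting on $\mathcal{X}$ by linear isometries, let $\gamma\colon\mathfrak{H}\to\mathcal{X}$, and let $(\Lambda_a)_{a\in\mathcal{A}}$ be a family of linear operators from $\mathcal{X}$ to $\mathfrak{H}$. The orbit of $x$ is $\mathsf{S}\cdot x=\{s\cdot x: s\in\mathsf{S}\}$; a map $f$ on $\mathcal{X}$ is $\mathsf{S}$-invariant if $f(s\cdot x)=f(x)$ for all $s,x$. The tuple is a spectral decomposition system for $\mathfrak{H}$ if: [A] every $\Lambda_a$ is an isometry; [B] there exists an $\mathsf{S}$-invariant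 $\tau\colon\mathcal{X}\to\mathcal{X}$ with $\tau(x)\in\mathsf{S}\cdot x$ for all $x$ and $\gamma\circ\Lambda_a=\tau$ for all $a$; [C] for every $X\in\mathfrak{H}$ there is $a$ with $X=\Lambda_a\gamma(X)$; [D] $\langle X,Y\rangle\leq\langle\gamma(X),\gamma(Y)\rangle$ for all $X,Y\in\mathfrak{H}$. The map $\tau$ in [B] is the spectral-induced ordering mapping. *)

theory Defs
  imports "HOL-Analysis.Analysis" "HOL-Algebra.Group"
begin

definition isometric_linear_action :: "('g, 'b) monoid_scheme \<Rightarrow> ('g \<Rightarrow> 'x::euclidean_space \<Rightarrow> 'x) \<Rightarrow> bool" where
  "isometric_linear_action G act \<longleftrightarrow>
     group G \<and>
     (\<forall>s\<in>carrier G. linear (act s) \<and> (\<forall>x. norm (act s x) = norm x)) \<and>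
     (\<forall>x. act \<one>\<^bsub>G\<^esub> x = x) \<and>
     (\<forall>s\<in>carrier G. \<forall>t\<in>carrier G. \<forall>x. act (s \<otimes>\<^bsub>G\<^esub> t) x = act s (act t x))"

definition orbit :: "('g, 'b) monoid_scheme \<Rightarrow> ('g \<Rightarrow> 'x \<Rightarrow> 'x) \<Rightarrow> 'x \<Rightarrow> 'x set" where
  "orbit G act x = (\<lambda>s. act s x) ` carrier G"

definition S_invariant :: "('g, 'b) monoid_scheme \<Rightarrow> ('g \<Rightarrow> 'x \<Rightarrow> 'x) \<Rightarrow> ('x \<Rightarrow> 'c) \<Rightarrow> bool" where
  "S_invariant G act f \<longleftrightarrow> (\<forall>s\<in>carrier G. \<forall>x. f (act s x) = f x)"

definition spectral_ordering_map ::
  "('g, 'b) monoid_scheme \<Rightarrow> ('g \<Rightarrow> 'x::euclidean_space \<Rightarrow> 'x) \<Rightarrow> ('h::euclidean_space \<Rightarrow> 'x)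
   \<Rightarrow> ('a \<Rightarrow> 'x \<Rightarrow> 'h) \<Rightarrow> 'a set \<Rightarrow> ('x \<Rightarrow> 'x) \<Rightarrow> bool" where
  "spectral_ordering_map G act \<gamma> \<Lambda> A \<tau> \<longleftrightarrow>
     S_invariant G act \<tau> \<and> (\<forall>x. \<tau> x \<in> orbit G act x) \<and> (\<forall>a\<in>A. \<gamma> \<circ> \<Lambda> a = \<tau>)"

definition spectral_decomposition_system ::
  "('g, 'b) monoid_scheme \<Rightarrow> ('g \<Rightarrow> 'x::euclidean_space \<Rightarrow> 'x) \<Rightarrow> ('h::euclidean_space \<Rightarrow> 'x)
   \<Rightarrow> ('a \<Rightarrow> 'x \<Rightarrow> 'h) \<Rightarrow> 'a set \<Rightarrow> bool" where
  "spectral_decomposition_system G act \<gamma> \<Lambda> A \<longleftrightarrow>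
     isometric_linear_action G act \<and>
     (\<forall>a\<in>A. linear (\<Lambda> a) \<and> (\<forall>x. norm (\<Lambda> a x) = norm x)) \<and>
     (\<exists>\<tau>. spectral_ordering_map G act \<gamma> \<Lambda> A \<tau>) \<and>
     (\<forall>X. \<exists>a\<in>A. X = \<Lambda> a (\<gamma> X)) \<and>
     (\<forall>X Y. X \<bullet> Y \<le> \<gamma> X \<bullet> \<gamma> Y)"

end

theory Submission
  imports Defs
begin

lemma lin_iso_inner:
  assumes "linear f" "\<forall>x. norm (f x) = norm x"
  shows "f x \<bullet> f y = x \<bullet> y"
proof -
  have "norm (f (x+y))^2 = norm (x+y)^2" using assms by simp
  then have 1: "(f x + f y) \<bullet> (f x + f y) = (x+y) \<bullet> (x+y)"
    using linear_add[OF assms(1)] by (simp add: power2_norm_eq_inner)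
  have 2: "f x \<bullet> f x = x \<bullet> x" "f y \<bullet> f y = y \<bullet> y" using assms(2) by (metis power2_norm_eq_inner)+
  show ?thesis using 1 2 by (simp add: inner_add inner_commute)
qed

theorem proposition3p3:
  fixes G :: "('g, 'b) monoid_scheme"
    and act :: "'g \<Rightarrow> 'x::euclidean_space \<Rightarrow> 'x"
    and \<gamma> :: "'h::euclidean_space \<Rightarrow> 'x"
    and \<Lambda> :: "'a \<Rightarrow> 'x \<Rightarrow> 'h"
    and A :: "'a set"
    and \<tau> :: "'x \<Rightarrow> 'x"
    and x y :: 'x
  assumes "spectral_decomposition_system G act \<gamma> \<Lambda> A"
    and "spectral_ordering_map G act \<gamma> \<Lambda> A \<tau>"
  shows "(\<tau> \<circ> \<tau> = \<tau>) \<and>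
         (\<forall>a\<in>A. norm (\<Lambda> a x) = norm x \<and> norm x = norm (\<tau> x)) \<and>
         (x \<bullet> y \<le> \<tau> x \<bullet> \<tau> y) \<and>
         ((\<exists>s\<in>carrier G. act s x \<bullet> y = \<tau> x \<bullet> \<tau> y) \<and>
          (\<forall>s\<in>carrier G. act s x \<bullet> y \<le> \<tau> x \<bullet> \<tau> y)) \<and>
         (norm (\<tau> x - \<tau> y) \<le> norm (x - y)) \<and>
         (closed (range \<tau>) \<and> convex (range \<tau>) \<and> cone (range \<tau>)) \<and>
         compact (orbit G act x)"
proof -
  have grp: "group G" and actlin: "\<And>s. s \<in> carrier G \<Longrightarrow> linear (act s)"
    and actn: "\<And>s. s \<in> carrier G \<Longrightarrow> \<forall>z. norm (act s z) = norm z"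
    and act1: "\<And>z. act \<one>\<^bsub>G\<^esub> z = z"
    and actm: "\<And>s t z. s \<in> carrier G \<Longrightarrow> t \<in> carrier G \<Longrightarrow> act (s \<otimes>\<^bsub>G\<^esub> t) z = act s (act t z)"
    using assms(1) unfolding spectral_decomposition_system_def isometric_linear_action_def by auto
  have Llin: "\<And>a. a \<in> A \<Longrightarrow> linear (\<Lambda> a)"
    and Ln: "\<And>a. a \<in> A \<Longrightarrow> \<forall>z. norm (\<Lambda> a z) = norm z"
    and C: "\<forall>X. \<exists>a\<in>A. X = \<Lambda> a (\<gamma> X)"
    and D: "\<And>X Y. X \<bullet> Y \<le> \<gamma> X \<bullet> \<gamma> Y"
    using assms(1) unfolding spectral_decomposition_system_def by auto
  have inv: "\<And>s z. s \<in> carrier G \<Longrightarrow> \<tau> (act s z) = \<tau> z"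
    and orb: "\<And>z. \<exists>s\<in>carrier G. \<tau> z = act s z"
    and gl: "\<And>a z. a \<in> A \<Longrightarrow> \<gamma> (\<Lambda> a z) = \<tau> z"
    using assms(2) unfolding spectral_ordering_map_def S_invariant_def orbit_def
    by (auto simp: fun_eq_iff)
  obtain a0 where a0: "a0 \<in> A" using C by blast
  have actinner: "\<And>s u v. s \<in> carrier G \<Longrightarrow> act s u \<bullet> act s v = u \<bullet> v"
    using actlin actn lin_iso_inner by blast
  have actinv: "\<And>s z. s \<in> carrier G \<Longrightarrow> act (inv\<^bsub>G\<^esub> s) (act s z) = z"
    by (metis actm act1 grp group.inv_closed group.l_inv)
  have tt: "\<And>z. \<tau> (\<tau> z) = \<tau> z" using inv orb by metis
  have nt: "\<And>z. norm (\<tau> z) = norm z" using actn orb by metis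
  have iii: "\<And>u v. u \<bullet> v \<le> \<tau> u \<bullet> \<tau> v"
  proof -
    fix u v
    have "u \<bullet> v = \<Lambda> a0 u \<bullet> \<Lambda> a0 v" using lin_iso_inner[OF Llin[OF a0] Ln[OF a0]] by simp
    also have "\<dots> \<le> \<tau> u \<bullet> \<tau> v" using D gl[OF a0] by metis
    finally show "u \<bullet> v \<le> \<tau> u \<bullet> \<tau> v" .
  qed
  have v: "\<And>u v. norm (\<tau> u - \<tau> v) \<le> norm (u - v)"
  proof -
    fix u v
    have "norm (\<tau> u - \<tau> v)^2 \<le> norm (u - v)^2"
    proof -
      have a: "\<tau> u \<bullet> \<tau> u = u \<bullet> u" "\<tau> v \<bullet> \<tau> v = v \<bullet> v"
        using nt by (metis power2_norm_eq_inner)+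
      show ?thesis using iii[of u v] a
        by (simp add: power2_norm_eq_inner inner_diff algebra_simps inner_commute)
    qed
    then show "norm (\<tau> u - \<tau> v) \<le> norm (u - v)" by (rule power2_le_imp_le) simp
  qed
  have iv1: "\<exists>s\<in>carrier G. act s x \<bullet> y = \<tau> x \<bullet> \<tau> y"
  proof -
    obtain s1 where s1: "s1 \<in> carrier G" "\<tau> x = act s1 x" using orb by blast
    obtain s2 where s2: "s2 \<in> carrier G" "\<tau> y = act s2 y" using orb by blast
    have i2: "inv\<^bsub>G\<^esub> s2 \<in> carrier G" using grp s2 by simp
    have "\<tau> x \<bullet> \<tau> y = act (inv\<^bsub>G\<^esub> s2) (\<tau> x) \<bullet> act (inv\<^bsub>G\<^esub> s2) (\<tau> y)"
      using actinner[OF i2] by simp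
    also have "\<dots> = act (inv\<^bsub>G\<^esub> s2 \<otimes>\<^bsub>G\<^esub> s1) x \<bullet> y"
      using s1 s2 actinv actm[OF i2 s1(1)] by simp
    finally show ?thesis using i2 s1 grp by (metis group.subgroup_self subgroup.m_closed)
  qed
  have iv2: "\<forall>s\<in>carrier G. act s x \<bullet> y \<le> \<tau> x \<bullet> \<tau> y"
    using iii inv by metis
  have R: "range \<tau> = (\<Inter>w. {z. (\<tau> w - w) \<bullet> z \<ge> 0})"
  proof
    show "range \<tau> \<subseteq> (\<Inter>w. {z. (\<tau> w - w) \<bullet> z \<ge> 0})"
    proof clarify
      fix u w
      show "0 \<le> (\<tau> w - w) \<bullet> \<tau> u" using iii[of "\<tau> u" w] tt[of u] by (simp add: inner_diff inner_commute)
    qed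
    show "(\<Inter>w. {z. (\<tau> w - w) \<bullet> z \<ge> 0}) \<subseteq> range \<tau>"
    proof
      fix z assume "z \<in> (\<Inter>w. {z. (\<tau> w - w) \<bullet> z \<ge> 0})"
      then have h: "z \<bullet> z \<le> z \<bullet> \<tau> z" by (simp add: inner_diff inner_commute)
      have "z \<bullet> \<tau> z \<le> norm z * norm (\<tau> z)" by (rule norm_cauchy_schwarz)
      then have "z \<bullet> \<tau> z \<le> z \<bullet> z" using nt[of z] by (simp add: power2_norm_eq_inner[symmetric] power2_eq_square)
      moreover have "\<tau> z \<bullet> \<tau> z = z \<bullet> z" using nt[of z] by (metis power2_norm_eq_inner)
      ultimately have "norm (z - \<tau> z)^2 = 0" using h
        by (simp add: power2_norm_eq_inner inner_diff inner_commute)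
      then have "z = \<tau> z" by simp
      then show "z \<in> range \<tau>" by (metis rangeI)
    qed
  qed
  have vi: "closed (range \<tau>) \<and> convex (range \<tau>) \<and> cone (range \<tau>)"
    unfolding R
    by (auto intro!: closed_INT convex_INT closed_halfspace_ge convex_halfspace_ge
        simp: cone_def)
  have O: "orbit G act x = {z. \<tau> z = \<tau> x} \<inter> cball 0 (norm x)"
  proof
    show "orbit G act x \<subseteq> {z. \<tau> z = \<tau> x} \<inter> cball 0 (norm x)"
      unfolding orbit_def using inv actn by auto
    show "{z. \<tau> z = \<tau> x} \<inter> cball 0 (norm x) \<subseteq> orbit G act x"
    proof clarify
      fix z assume e: "\<tau> z = \<tau> x"
      obtain s1 where s1: "s1 \<in> carrier G" "\<tau> x = act s1 x" using orb by blast
      obtain s2 where s2: "s2 \<in> carrier G" "\<tau> z = act s2 z" using orb by blast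
      have i2: "inv\<^bsub>G\<^esub> s2 \<in> carrier G" using grp s2 by simp
      have "z = act (inv\<^bsub>G\<^esub> s2) (act s1 x)" using e s1 s2 actinv by metis
      also have "\<dots> = act (inv\<^bsub>G\<^esub> s2 \<otimes>\<^bsub>G\<^esub> s1) x" using actm[OF i2 s1(1)] by simp
      finally show "z \<in> orbit G act x" unfolding orbit_def using i2 s1 grp
        by (metis group.subgroup_self subgroup.m_closed image_eqI)
    qed
  qed
  have ct: "continuous_on UNIV \<tau>"
  proof (rule lipschitz_on_continuous_on)
    show "1-lipschitz_on UNIV \<tau>" by (auto simp: lipschitz_on_def dist_norm v)
  qed
  have "closed {z. \<tau> z = \<tau> x}"
    using continuous_closed_preimage_constant[OF ct closed_UNIV] by simp
  then have vii: "compact (orbit G act x)" unfolding O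
    by (intro compact_Int_closed[OF compact_cball] | rule closed_Int_compact, auto)
  show ?thesis
    using tt Ln nt iii iv1 iv2 v vi vii by (auto simp: fun_eq_iff)
qed

end
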